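(* Assume $A$ has no eigenvalue equal to $1$, let $M=C(I-A)^{-1}$ and $\gamma>0$. Suppose $\lambda\in\mathbb{R}_+$, $P\in\mathbb{S}^{n_x}_{\succ0}$, $\tilde Z\in\mathbb{S}^{n_y}_{\succ0}$, $G\in\mathbb{R}^{n_x\times n_y}$, $Y\in\mathbb{R}^{n_y\times n_a}$ satisfy $$\begin{bmatrix}P & PA-GC & PB_\omega-GD_\omega\\ * & P & 0\\ * & * & I\end{bmatrix}\succ0,\qquad \begin{bmatrix}\tilde Z & \tilde ZC & \tilde ZD_\omega\\ * & P & 0\\ * & 0 & I\end{bmatrix}\succ0,\qquad \begin{bmatrix}\Theta_1 & \begin{bmatrix}\Theta_2 & \Theta_3\end{bmatrix}\\ * & \begin{bmatrix}\tfrac1\gamma P & 0\\ 0 & \gamma P\end{bmatrix}\end{bmatrix}\succeq0,$$ where $$\Theta_1=\begin{bmatrix}D_a^\top Y+Y^\top D_a-\lambda D_a^\top WD_a & Y^\top\\ * & \tfrac12\tilde Z\end{bmatrix},\quad \Theta_2=\begin{bmatrix}-Y^\top M\\ 0\end{bmatrix},\quad \Theta_3=\begin{bmatrix}0\\ G^\top\end{bmatrix}.$$ Then with $L=P^{-1}G$ we have $\rho(A-LC)<1$ and $$\tfrac12D_a^\top(I+ML)^{-\top}\Sigma_{r_\omega}^{-1}(L)(I+ML)^{-1}D_a-\lambda D_a^\top WD_a\succeq0,$$ i.e., $(L,\lambda)$ is feasible for the steady-state design problem $\max_{L,\lambda\in\mathbb{R}_+}\{\lambda:\ \tfrac12D_a^\top\Phi(\infty,L)^\top\Sigma_{r_\omega}^{-1}(L)\Phi(\infty,L)D_a-\lambda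 D_a^\top WD_a\succeq0,\ \rho(A-LC)<1\}$ with $\Phi(\infty,L)=(I+ML)^{-1}$; maximizing $\lambda$ subject to these LMIs thus approximates that problem.
   Context: System: $x(k+1)=Ax(k)+Bu(k)+B_\omega\omega(k)$, $y(k)=Cx(k)+D_\omega\omega(k)+y_a(k)$, $x\in\mathbb{R}^{n_x}$, $y\in\mathbb{R}^{n_y}$, $\omega(k)\sim\mathcal N(0,I_{n_\omega})$ i.i.d., $(A,C)$ detectable, $(A,B_\omega)$ stabilizable; observer $\hat x(k+1)=A\hat x+Bu+L(y-C\hat x)$ with residual $r=y-C\hat x$. Bias injection attack $y_a(k)=D_a\bar a$ for $k\ge0$ (zero before), with $D_a\in\mathbb{R}^{n_y\times n_a}$ having entries $(j_i,i)=1$ for compromised sensor indices $j_1<\dots<j_{n_a}$ and zeros elsewhere; $W\in\mathbb{R}^{n_y\times n_y}$ symmetric positive semidefinite. $\rho$ is spectral radius, $\mathbb{R}_+$ the positive reals, $\mathbb{S}^n_{\succ0}$ the symmetric positive definite $n\times n$ matrices, $*$ denotes blocks determined by symmetry, and $X^{-\top}=(X^{-1})^\top$. For stabilizing $L$, $\Sigma_{\tilde x}(L)$ solves $\Sigma=(A-LC)\Sigma(A-LC)^\top+(B_\omega-LD_\omega)(B_\omega-LD_\omega)^\top$ and $\Sigma_{r_\omega}(L)=C\Sigma_{\tilde x}(L)C^\top+D_\omega D_\omega^\top$ (assumed invertible). The steady-state transition matrix is $\Phi(\infty,L)=I-C(I-A+LC)^{-1}L$, which equals $(I+ML)^{-1}$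 for stabilizing $L$ when $A$ has no unit eigenvalue. *)

theory Defs
  imports "HOL-Analysis.Analysis"
begin

text \<open>Real matrices are HOL-Analysis matrices: an m x n real matrix is
  real^'n^'m (rows indexed by 'm). Dimensions are finite index types.\<close>

definition sym_mat :: "real^'n^'n \<Rightarrow> bool" where
  "sym_mat X \<longleftrightarrow> transpose X = X"

definition pos_def :: "real^'n^'n \<Rightarrow> bool" where
  "pos_def X \<longleftrightarrow> sym_mat X \<and> (\<forall>x. x \<noteq> 0 \<longrightarrow> x \<bullet> (X *v x) > 0)"

definition pos_semidef :: "real^'n^'n \<Rightarrow> bool" where
  "pos_semidef X \<longleftrightarrow> sym_mat X \<and> (\<forall>x. x \<bullet> (X *v x) \<ge> 0)"

text \<open>Block matrices [P Q; R S], vertical stacking [X; Y], and symmetric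
  blocks [P Q; * S] where * = Q transposed.\<close>
definition blk :: "real^'b^'a \<Rightarrow> real^'d^'a \<Rightarrow> real^'b^'c \<Rightarrow> real^'d^'c
                     \<Rightarrow> real^('b + 'd)^('a + 'c)" where
  "blk P Q R S = (\<chi> i j. case i of
      Inl a \<Rightarrow> (case j of Inl b \<Rightarrow> P $ a $ b | Inr d \<Rightarrow> Q $ a $ d)
    | Inr c \<Rightarrow> (case j of Inl b \<Rightarrow> R $ c $ b | Inr d \<Rightarrow> S $ c $ d))"

definition vstack :: "real^'b^'a \<Rightarrow> real^'b^'c \<Rightarrow> real^'b^('a + 'c)" where
  "vstack X Y = (\<chi> i. case i of Inl a \<Rightarrow> X $ a | Inr c \<Rightarrow> Y $ c)"

definition sblk :: "real^'a^'a \<Rightarrow> real^'c^'a \<Rightarrow> real^'c^'c \<Rightarrow> real^('a + 'c)^('a + 'c)" where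
  "sblk P Q S = blk P Q (transpose Q) S"

definition cmat :: "real^'n^'n \<Rightarrow> complex^'n^'n" where
  "cmat X = (\<chi> i j. complex_of_real (X $ i $ j))"

definition is_eigenvalue :: "real^'n^'n \<Rightarrow> complex \<Rightarrow> bool" where
  "is_eigenvalue X l \<longleftrightarrow> (\<exists>v::complex^'n. v \<noteq> 0 \<and> cmat X *v v = l *s v)"

definition spectral_radius :: "real^'n^'n \<Rightarrow> real" where
  "spectral_radius X = Max (cmod ` {l. is_eigenvalue X l})"

definition detectable :: "real^'n^'n \<Rightarrow> real^'n^'m \<Rightarrow> bool" where
  "detectable A C \<longleftrightarrow> (\<exists>L::real^'m^'n. spectral_radius (A - L ** C) < 1)"

definition stabilizable :: "real^'n^'n \<Rightarrow> real^'k^'n \<Rightarrow> bool" where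
  "stabilizable A B \<longleftrightarrow> (\<exists>K::real^'n^'k. spectral_radius (A - B ** K) < 1)"

text \<open>Steady-state estimation error covariance: the solution of the Lyapunov equation
  Sigma = (A-LC) Sigma (A-LC)^T + (B_w - L D_w)(B_w - L D_w)^T (unique for stabilizing L).\<close>
definition Sigma_x :: "real^'nx^'nx \<Rightarrow> real^'nx^'ny \<Rightarrow> real^'nw^'nx \<Rightarrow> real^'nw^'ny
                        \<Rightarrow> real^'ny^'nx \<Rightarrow> real^'nx^'nx" where
  "Sigma_x A C Bw Dw L = (THE S. S = (A - L ** C) ** S ** transpose (A - L ** C)
                                + (Bw - L ** Dw) ** transpose (Bw - L ** Dw))"

definition Sigma_r :: "real^'nx^'nx \<Rightarrow> real^'nx^'ny \<Rightarrow> real^'nw^'nx \<Rightarrow> real^'nw^'ny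
                        \<Rightarrow> real^'ny^'nx \<Rightarrow> real^'ny^'ny" where
  "Sigma_r A C Bw Dw L = C ** Sigma_x A C Bw Dw L ** transpose C + Dw ** transpose Dw"

end

theory Submission
  imports Defs "HOL-Computational_Algebra.Fundamental_Theorem_Algebra"
begin


definition vjoin :: "real^'a \<Rightarrow> real^'c \<Rightarrow> real^('a + 'c)" where
  "vjoin x y = (\<chi> i. case i of Inl a \<Rightarrow> x $ a | Inr c \<Rightarrow> y $ c)"

lemma sum_UNIV_plus:
  "(\<Sum>i\<in>(UNIV::('a::finite + 'c::finite) set). f i) = (\<Sum>a\<in>UNIV. f (Inl a)) + (\<Sum>c\<in>UNIV. f (Inr c))"
proof -
  have "(UNIV::('a + 'c) set) = UNIV <+> UNIV" by auto
  then have "(\<Sum>i\<in>(UNIV::('a + 'c) set). f i) = (\<Sum>i\<in>UNIV <+> UNIV. f i)" by simp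
  also have "\<dots> = (\<Sum>a\<in>UNIV. f (Inl a)) + (\<Sum>c\<in>UNIV. f (Inr c))"
    by (simp only: sum.Plus finite comp_def)
  finally show ?thesis .
qed

lemma blk_mv: "blk P Q R S *v vjoin x y = vjoin (P *v x + Q *v y) (R *v x + S *v y)"
  by (simp add: vec_eq_iff blk_def vjoin_def matrix_vector_mult_def sum_UNIV_plus split: sum.split)

lemma vstack_mv: "vstack X Y *v c = vjoin (X *v c) (Y *v c)"
  by (simp add: vec_eq_iff vstack_def vjoin_def matrix_vector_mult_def split: sum.split)

lemma inner_vjoin: "vjoin a b \<bullet> vjoin c d = a \<bullet> c + b \<bullet> d"
  by (simp add: inner_vec_def vjoin_def sum_UNIV_plus)

lemma vjoin_eq_0: "vjoin x y = 0 \<longleftrightarrow> x = 0 \<and> y = 0"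
  by (auto simp: vjoin_def vec_eq_iff split: sum.split)

lemma tr_inner: fixes A :: "real^'n^'m" shows "x \<bullet> (transpose A *v y) = (A *v x) \<bullet> y"
proof -
  have "x \<bullet> (transpose A *v y) = (y v* A) \<bullet> x" by (simp only: transpose_matrix_vector inner_commute)
  also have "\<dots> = y \<bullet> (A *v x)" by (rule dot_lmul_matrix)
  also have "\<dots> = (A *v x) \<bullet> y" by (rule inner_commute)
  finally show ?thesis .
qed

lemma quad_sblk:
  "vjoin x y \<bullet> (sblk P Q S *v vjoin x y) = x \<bullet> (P *v x) + 2 * (x \<bullet> (Q *v y)) + y \<bullet> (S *v y)"
proof -
  have "y \<bullet> (transpose Q *v x) = x \<bullet> (Q *v y)" by (simp only: tr_inner inner_commute)
  then show ?thesis by (simp add: sblk_def blk_mv inner_vjoin inner_add_right)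
qed

lemma neg_mv: fixes A :: "real^'n^'m" shows "(- A) *v x = - (A *v x)"
proof -
  have "(- A) *v x = (0 - A) *v x" by simp
  also have "\<dots> = 0 *v x - A *v x" by (rule matrix_vector_mult_diff_rdistrib)
  also have "\<dots> = - (A *v x)" by simp
  finally show ?thesis .
qed

lemma quad3:
  "vjoin (vjoin a b) c \<bullet> (sblk (sblk P1 K P2) (vstack R (0::real^'c^'b)) S *v vjoin (vjoin a b) c)
   = a \<bullet> (P1 *v a) + 2 * (a \<bullet> (K *v b)) + b \<bullet> (P2 *v b) + 2 * (a \<bullet> (R *v c)) + c \<bullet> (S *v c)"
  by (simp add: quad_sblk vstack_mv inner_vjoin)

lemma quad_lmi3:
  "vjoin (vjoin u w) (vjoin p q) \<bullet> (sblk (sblk T1 T2 T3) (blk N1 (0::real^'d^'a) (0::real^'b^'c) N2) (blk S1 (0::real^'d^'b) (0::real^'b^'d) S2) *v vjoin (vjoin u w) (vjoin p q))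
   = u \<bullet> (T1 *v u) + 2 * (u \<bullet> (T2 *v w)) + w \<bullet> (T3 *v w) + 2 * (u \<bullet> (N1 *v p) + w \<bullet> (N2 *v q))
     + p \<bullet> (S1 *v p) + q \<bullet> (S2 *v q)"
  by (simp add: quad_sblk blk_mv inner_vjoin)

lemma sym_from_vec:
  fixes X :: "real^'n^'n"
  assumes "\<And>x y. x \<bullet> (X *v y) = y \<bullet> (X *v x)"
  shows "transpose X = X"
proof -
  have "X $ i $ j = X $ j $ i" for i j
    using assms[of "axis i 1" "axis j 1"]
    by (simp add: inner_axis' matrix_vector_mult_basis column_def)
  then show ?thesis by (simp add: vec_eq_iff transpose_def)
qed

lemma vec_from_sym:
  fixes X :: "real^'n^'n"
  assumes "transpose X = X"
  shows "x \<bullet> (X *v y) = y \<bullet> (X *v x)"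
  by (metis assms inner_commute tr_inner)

lemma inv_sym:
  fixes X Xi :: "real^'n^'n"
  assumes "\<And>x y. x \<bullet> (X *v y) = y \<bullet> (X *v x)" and "X ** Xi = mat 1"
  shows "x \<bullet> (Xi *v y) = y \<bullet> (Xi *v x)"
proof -
  have e: "X *v (Xi *v z) = z" for z by (simp add: matrix_vector_mul_assoc assms(2))
  have "x \<bullet> (Xi *v y) = (X *v (Xi *v x)) \<bullet> (Xi *v y)" by (simp add: e)
  also have "\<dots> = (Xi *v y) \<bullet> (X *v (Xi *v x))" by (simp add: inner_commute)
  also have "\<dots> = (Xi *v x) \<bullet> (X *v (Xi *v y))" using assms(1) by simp
  also have "\<dots> = y \<bullet> (Xi *v x)" by (simp add: e inner_commute)
  finally show ?thesis .
qed

lemma invertible_inv: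
  fixes X :: "real^'n^'n"
  assumes "invertible X"
  shows "X ** matrix_inv X = mat 1" "matrix_inv X ** X = mat 1"
  using someI_ex[OF assms[unfolded invertible_def]] by (auto simp: matrix_inv_def)

lemma inj_invertible:
  fixes X :: "'a::field^'n^'n"
  assumes "\<And>x. X *v x = 0 \<Longrightarrow> x = 0"
  shows "invertible X"
  using assms vec.inj_iff_eq_0 matrix_left_invertible_injective invertible_left_inverse by metis

lemma pos_def_invertible:
  assumes "pos_def X" shows "invertible X"
proof (rule inj_invertible)
  fix x assume h: "X *v x = 0"
  show "x = 0"
  proof (rule ccontr)
    assume "x \<noteq> 0"
    then have "x \<bullet> (X *v x) > 0" using assms unfolding pos_def_def by blast
    then show False using h by simp
  qed
qed


lemma qf_scale: fixes Q :: "real^'n^'n" shows "(r *\<^sub>R u) \<bullet> (Q *v (r *\<^sub>R u)) = r^2 * (u \<bullet> (Q *v u))"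
proof -
  have "Q *v (r *\<^sub>R u) = r *\<^sub>R (Q *v u)" by (rule matrix_vector_mult_scaleR)
  then show ?thesis by (simp only: inner_scaleR_left inner_scaleR_right power2_eq_square mult.assoc)
qed

lemma madd_rdistrib: "(A + B) ** (C::real^'c^'b) = A ** C + B ** (C::real^'c^'b)"
  by (simp add: matrix_matrix_mult_def vec_eq_iff sum.distrib algebra_simps)

lemma contraction_tendsto:
  fixes Ft Q :: "real^'n^'n"
  assumes contr: "\<And>v. v \<noteq> 0 \<Longrightarrow> (Ft *v v) \<bullet> (Q *v (Ft *v v)) < v \<bullet> (Q *v v)"
    and pos: "\<And>v. v \<noteq> 0 \<Longrightarrow> v \<bullet> (Q *v v) > 0"
  shows "(\<lambda>k. ((*v) Ft ^^ k) v) \<longlonglongrightarrow> 0"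
proof -
  define qf where "qf u = u \<bullet> (Q *v u)" for u
  define S where "S = sphere (0::real^'n) 1"
  have cS: "compact S" by (simp add: S_def)
  have Sne: "S \<noteq> {}" by (simp add: S_def)
  have S0: "u \<noteq> 0" if "u \<in> S" for u using that by (auto simp: S_def)
  have qf0: "qf 0 = 0" by (simp add: qf_def)
  have qfpos: "qf u > 0" if "u \<noteq> 0" for u using pos that by (simp add: qf_def)
  have qfnn: "qf u \<ge> 0" for u using qfpos[of u] qf0 by (cases "u = 0") auto
  have qfs: "qf (r *\<^sub>R u) = r^2 * qf u" for r u unfolding qf_def by (rule qf_scale)
  have contq: "continuous_on S qf" unfolding qf_def
    by (intro continuous_intros matrix_vector_mult_linear_continuous_on)
  have contqF: "continuous_on S (\<lambda>u. qf (Ft *v u))" unfolding qf_def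
    by (intro continuous_intros continuous_on_compose2[OF matrix_vector_mult_linear_continuous_on]
        matrix_vector_mult_linear_continuous_on) auto
  have contg: "continuous_on S (\<lambda>u. qf (Ft *v u) / qf u)"
    using contq contqF qfpos S0 by (intro continuous_on_divide) (auto simp: less_le)
  obtain u0 where u0: "u0 \<in> S" "\<And>u. u \<in> S \<Longrightarrow> qf (Ft *v u) / qf u \<le> qf (Ft *v u0) / qf u0"
    using continuous_attains_sup[OF cS Sne contg] by blast
  define c where "c = qf (Ft *v u0) / qf u0"
  have c1: "c < 1" using contr[OF S0[OF u0(1)]] qfpos[OF S0[OF u0(1)]]
    by (simp add: c_def qf_def)
  have c0: "c \<ge> 0" using qfnn qfpos[OF S0[OF u0(1)]] by (simp add: c_def)
  obtain u1 where u1: "u1 \<in> S" "\<And>u. u \<in> S \<Longrightarrow> qf u1 \<le> qf u"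
    using continuous_attains_inf[OF cS Sne contq] by blast
  define m where "m = qf u1"
  have m0: "m > 0" using qfpos[OF S0[OF u1(1)]] by (simp add: m_def)
  have key1: "qf (Ft *v v) \<le> c * qf v" for v
  proof (cases "v = 0")
    case True then show ?thesis by (simp add: qf0)
  next
    case False
    define u where "u = (1 / norm v) *\<^sub>R v"
    have uS: "u \<in> S" using False by (simp add: u_def S_def)
    have vu: "v = norm v *\<^sub>R u" using False by (simp add: u_def)
    have "qf (Ft *v u) \<le> c * qf u"
      using u0(2)[OF uS] qfpos[OF S0[OF uS]] by (simp add: c_def divide_le_eq)
    then have "norm v ^ 2 * qf (Ft *v u) \<le> norm v ^ 2 * (c * qf u)"
      by (simp add: mult_left_mono)
    then show ?thesis
      by (subst (1 2) vu) (simp add: qfs matrix_vector_mult_scaleR mult_ac)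
  qed
  have key2: "m * norm v ^ 2 \<le> qf v" for v
  proof (cases "v = 0")
    case True then show ?thesis by (simp add: qf0)
  next
    case False
    define u where "u = (1 / norm v) *\<^sub>R v"
    have uS: "u \<in> S" using False by (simp add: u_def S_def)
    have vu: "v = norm v *\<^sub>R u" using False by (simp add: u_def)
    have "m \<le> qf u" using u1(2)[OF uS] by (simp add: m_def)
    then have "norm v ^ 2 * m \<le> norm v ^ 2 * qf u"
      by (simp add: mult_left_mono)
    then show ?thesis
      by (subst (2) vu) (simp add: qfs mult_ac)
  qed
  define w where "w k = ((*v) Ft ^^ k) v" for k
  have wS: "w (Suc k) = Ft *v w k" for k by (simp add: w_def)
  have it: "qf (w k) \<le> c ^ k * qf v" for k
  proof (induction k)
    case 0 then show ?case by (simp add: w_def)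
  next
    case (Suc k)
    have "qf (w (Suc k)) \<le> c * qf (w k)" using key1 wS by simp
    also have "\<dots> \<le> c * (c ^ k * qf v)" using Suc c0 by (simp add: mult_left_mono)
    finally show ?case by (simp add: mult_ac)
  qed
  have nb: "norm (w k) \<le> sqrt (c ^ k * (qf v / m))" for k
  proof -
    have "m * norm (w k) ^ 2 \<le> c ^ k * qf v" using key2[of "w k"] it[of k] by linarith
    then have "norm (w k) ^ 2 \<le> c ^ k * (qf v / m)" using m0
      by (simp add: field_simps)
    then show ?thesis by (simp add: real_le_rsqrt)
  qed
  have lim: "(\<lambda>k. sqrt (c ^ k * (qf v / m))) \<longlonglongrightarrow> 0"
  proof -
    have "(\<lambda>k. c ^ k * (qf v / m)) \<longlonglongrightarrow> 0 * (qf v / m)"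
      by (intro tendsto_mult tendsto_const LIMSEQ_realpow_zero c0 c1)
    then have "(\<lambda>k. sqrt (c ^ k * (qf v / m))) \<longlonglongrightarrow> sqrt (0 * (qf v / m))"
      by (rule tendsto_real_sqrt)
    then show ?thesis by simp
  qed
  have "w \<longlonglongrightarrow> 0"
    by (rule Lim_null_comparison[OF _ lim]) (use nb in auto)
  then show ?thesis unfolding w_def[abs_def] .
qed

lemma lyap_psd:
  fixes Ft X :: "real^'n^'n"
  assumes tend: "\<And>v. (\<lambda>k. ((*v) Ft ^^ k) v) \<longlonglongrightarrow> 0"
    and dec: "\<And>v. (Ft *v v) \<bullet> (X *v (Ft *v v)) \<le> v \<bullet> (X *v v)"
  shows "v \<bullet> (X *v v) \<ge> 0"
proof -
  define w where "w k = ((*v) Ft ^^ k) v" for k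
  have le: "w k \<bullet> (X *v w k) \<le> v \<bullet> (X *v v)" for k
  proof (induction k)
    case 0 then show ?case by (simp add: w_def)
  next
    case (Suc k)
    have "w (Suc k) = Ft *v w k" by (simp add: w_def)
    then show ?case using dec[of "w k"] Suc by simp
  qed
  have t: "w \<longlonglongrightarrow> 0" unfolding w_def[abs_def] by (rule tend)
  have "(\<lambda>k. w k \<bullet> (X *v w k)) \<longlonglongrightarrow> 0 \<bullet> (X *v 0)"
    by (intro tendsto_inner t bounded_linear.tendsto[OF matrix_vector_mul_bounded_linear])
  then have "(\<lambda>k. w k \<bullet> (X *v w k)) \<longlonglongrightarrow> 0" by simp
  then show ?thesis using le by (intro LIMSEQ_le_const2) auto
qed

lemma inner_mv_tr: fixes F :: "real^'n^'m" shows "x \<bullet> (F *v z) = (transpose F *v x) \<bullet> z"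
  using tr_inner[of x "transpose F" z] by (simp only: transpose_transpose)

lemma lyap_zero:
  fixes F D :: "real^'n^'n"
  assumes tend: "\<And>v. (\<lambda>k. ((*v) (transpose F) ^^ k) v) \<longlonglongrightarrow> 0"
    and eq: "D = F ** D ** transpose F"
  shows "D = 0"
proof -
  have step: "x \<bullet> (D *v y) = (transpose F *v x) \<bullet> (D *v (transpose F *v y))" for x y
  proof -
    have "x \<bullet> (D *v y) = x \<bullet> ((F ** D ** transpose F) *v y)" using eq by simp
    also have "\<dots> = x \<bullet> (F *v (D *v (transpose F *v y)))" by (simp only: matrix_vector_mul_assoc matrix_mul_assoc)
    also have "\<dots> = (transpose F *v x) \<bullet> (D *v (transpose F *v y))" by (rule inner_mv_tr)
    finally show ?thesis .
  qed
  have z: "x \<bullet> (D *v y) = 0" for x y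
  proof -
    define w where "w u k = ((*v) (transpose F) ^^ k) u" for u k
    have c: "x \<bullet> (D *v y) = w x k \<bullet> (D *v w y k)" for k
    proof (induction k)
      case 0 then show ?case by (simp add: w_def)
    next
      case (Suc k)
      have "w x (Suc k) = transpose F *v w x k" "w y (Suc k) = transpose F *v w y k" by (simp_all add: w_def)
      then show ?case using Suc step[of "w x k" "w y k"] by simp
    qed
    have "(\<lambda>k. w x k \<bullet> (D *v w y k)) \<longlonglongrightarrow> 0 \<bullet> (D *v 0)"
      using tend[of x] tend[of y] unfolding w_def
      by (intro tendsto_inner bounded_linear.tendsto[OF matrix_vector_mul_bounded_linear]) auto
    then have "(\<lambda>k. x \<bullet> (D *v y)) \<longlonglongrightarrow> 0" using c by simp
    then show ?thesis by (simp add: LIMSEQ_const_iff)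
  qed
  have "D *v y = 0" for y using z[of "D *v y" y] by simp
  then show ?thesis by (metis matrix_vector_mult_0 matrix_eq)
qed

lemma lyap_lin: "linear (\<lambda>D::real^'n^'n. D - F ** D ** transpose F)"
  by (rule linearI) (simp_all add: matrix_add_ldistrib madd_rdistrib matrix_scalar_ac scalar_matrix_assoc algebra_simps)

lemma lyap_unique:
  fixes F :: "real^'n^'n" and R :: "real^'n^'n"
  assumes tend: "\<And>v. (\<lambda>k. ((*v) (transpose F) ^^ k) v) \<longlonglongrightarrow> 0"
  shows "\<exists>!S. S = F ** S ** transpose F + R"
proof -
  define T where "T = (\<lambda>D::real^'n^'n. D - F ** D ** transpose F)"
  have lin: "linear T" unfolding T_def by (rule lyap_lin)
  have inj: "inj T"
  proof (rule injI)
    fix D1 D2 assume h: "T D1 = T D2"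
    have "T (D1 - D2) = 0" using h lin by (simp add: linear_diff)
    then have "D1 - D2 = F ** (D1 - D2) ** transpose F" by (simp add: T_def)
    then have "D1 - D2 = 0" by (rule lyap_zero[OF tend])
    then show "D1 = D2" by simp
  qed
  have "surj T" by (rule linear_inj_imp_surj[OF lin inj])
  then obtain S where "T S = R" by (metis surjD)
  then have ex: "S = F ** S ** transpose F + R" by (simp add: T_def algebra_simps)
  show ?thesis
  proof (rule ex1I[of _ S])
    show "S = F ** S ** transpose F + R" by (rule ex)
    fix S' assume h: "S' = F ** S' ** transpose F + R"
    have a: "T S' = R" unfolding T_def using h by (metis add_diff_cancel_left')
    have b: "T S = R" unfolding T_def using ex by (metis add_diff_cancel_left')
    from a b have "T S' = T S" by simp
    then show "S' = S" using inj by (simp add: inj_eq)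
  qed
qed


lemma mat_mv: "(mat l :: 'a::comm_ring_1^'n^'n) *v v = l *s v"
proof -
  have "(\<Sum>j\<in>UNIV. (if i = j then l else 0) * v$j) = (\<Sum>j\<in>UNIV. if i = j then l * v$j else 0)" for i
    by (rule sum.cong) auto
  then show ?thesis by (simp add: vec_eq_iff matrix_vector_mult_def mat_def)
qed

lemma eig_det: "is_eigenvalue X l \<longleftrightarrow> det (cmat X - mat l) = 0"
proof
  assume "is_eigenvalue X l"
  then obtain v where v: "v \<noteq> 0" "cmat X *v v = l *s v" unfolding is_eigenvalue_def by blast
  have "(cmat X - mat l) *v v = 0" using v by (simp add: matrix_vector_mult_diff_rdistrib mat_mv)
  then have "\<not> inj ((*v) (cmat X - mat l))" using v(1) by (metis matrix_vector_mult_0_right injD)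
  then have "\<not> invertible (cmat X - mat l)" using inj_matrix_vector_mult by blast
  then show "det (cmat X - mat l) = 0" by (simp add: invertible_det_nz)
next
  assume "det (cmat X - mat l) = 0"
  then have "\<not> invertible (cmat X - mat l)" by (simp add: invertible_det_nz)
  then obtain v where v: "(cmat X - mat l) *v v = 0" "v \<noteq> 0" using inj_invertible by blast
  then have "cmat X *v v = l *s v" by (simp add: matrix_vector_mult_diff_rdistrib mat_mv)
  then show "is_eigenvalue X l" using v(2) unfolding is_eigenvalue_def by blast
qed

definition cp :: "real^'n^'n \<Rightarrow> complex poly" where
  "cp X = (\<Sum>p | p permutes (UNIV::'n set). smult (of_int (sign p))
            (\<Prod>i\<in>UNIV. (if i = p i then [: cmat X $ i $ p i, -1 :] else [: cmat X $ i $ p i :])))"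

lemma poly_cp: fixes X :: "real^'n^'n" shows "poly (cp X) l = det (cmat X - mat l)"
proof -
  have f: "poly (if i = p i then [: cmat X $ i $ p i, -1 :] else [: cmat X $ i $ p i :]) l
          = (cmat X - mat l) $ i $ p i" for i and p :: "'n \<Rightarrow> 'n"
    by (simp add: mat_def)
  show ?thesis unfolding cp_def det_def poly_sum poly_smult poly_prod f by simp
qed

lemma coeff_cp: "coeff (cp (X::real^'n^'n)) CARD('n) = (-1) ^ CARD('n)"
proof -
  let ?n = "CARD('n)"
  let ?f = "\<lambda>p. smult (of_int (sign p))
            (\<Prod>i\<in>UNIV. (if i = p i then [: cmat X $ i $ p i, -1 :] else [: cmat X $ i $ p i :]))"
  have fin: "finite {p. p permutes (UNIV::'n set)}" by (simp add: finite_permutations)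
  have idp: "id \<in> {p. p permutes (UNIV::'n set)}" by (simp add: permutes_id)
  have other: "coeff (?f p) ?n = 0" if pp: "p permutes UNIV" and pid: "p \<noteq> id" for p
  proof -
    obtain j where j: "p j \<noteq> j" using pid by (metis eq_id_iff)
    have "degree (\<Prod>i\<in>UNIV. (if i = p i then [: cmat X $ i $ p i, -1 :] else [: cmat X $ i $ p i :]))
          \<le> (\<Sum>i\<in>UNIV. degree (if i = p i then [: cmat X $ i $ p i, -1 :] else [: cmat X $ i $ p i :]))"
      using degree_prod_sum_le[OF finite[of UNIV], of "\<lambda>i. (if i = p i then [: cmat X $ i $ p i, -1 :] else [: cmat X $ i $ p i :])"]
      by (simp add: comp_def)
    also have "\<dots> = (\<Sum>i\<in>UNIV. if i = p i then 1 else 0)"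
      by (intro sum.cong) auto
    also have "\<dots> = card {i. i = p i}" by (simp add: sum.If_cases)
    also have "\<dots> < ?n"
    proof (intro psubset_card_mono)
      show "{i. i = p i} \<subset> UNIV" using j by (metis (mono_tags) UNIV_I mem_Collect_eq psubsetI subsetI)
    qed auto
    finally show ?thesis by (simp add: coeff_eq_0)
  qed
  have idc: "coeff (?f id) ?n = (-1) ^ ?n"
  proof -
    let ?g = "\<lambda>i. [: cmat X $ i $ i, -1 :: complex :]"
    have e: "?f id = (\<Prod>i\<in>UNIV. ?g i)" by (simp add: sign_id)
    have d: "degree (\<Prod>i\<in>UNIV. ?g i) = ?n"
      by (subst degree_prod_sum_eq) auto
    have "lead_coeff (\<Prod>i\<in>UNIV. ?g i) = (\<Prod>i\<in>(UNIV::'n set). -1)"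
      by (simp add: lead_coeff_prod)
    then show ?thesis using d e by simp
  qed
  have "coeff (cp X) ?n = (\<Sum>p | p permutes (UNIV::'n set). coeff (?f p) ?n)"
    by (simp add: cp_def coeff_sum)
  also have "\<dots> = coeff (?f id) ?n"
    by (rule sum.mono_neutral_right[OF fin, of "{id}", simplified]) (use idp other in auto)
  also have "\<dots> = (-1) ^ ?n" by (rule idc)
  finally show ?thesis .
qed

lemma eig_finite_ne:
  fixes X :: "real^'n^'n"
  shows "finite {l. is_eigenvalue X l}" "{l. is_eigenvalue X l} \<noteq> {}"
proof -
  have set: "{l. is_eigenvalue X l} = {l. poly (cp X) l = 0}" by (simp add: eig_det poly_cp)
  have nz: "coeff (cp X) CARD('n) \<noteq> 0" by (simp add: coeff_cp)
  then have "cp X \<noteq> 0" by auto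
  then show "finite {l. is_eigenvalue X l}" unfolding set by (rule poly_roots_finite)
  have "CARD('n) \<le> degree (cp X)" using nz by (rule le_degree)
  then have "0 < degree (cp X)" using finite_UNIV_card_ge_0[OF finite[of "UNIV::'n set"]] by linarith
  then obtain z where "poly (cp X) z = 0" using alg_closed_imp_poly_has_root by blast
  then show "{l. is_eigenvalue X l} \<noteq> {}" unfolding set by blast
qed


lemma qf_comb:
  fixes P :: "real^'n^'n"
  assumes Psym: "\<And>x y. x \<bullet> (P *v y) = y \<bullet> (P *v x)"
  shows "(a *\<^sub>R x + b *\<^sub>R y) \<bullet> (P *v (a *\<^sub>R x + b *\<^sub>R y))
       = a^2 * (x \<bullet> (P *v x)) + 2 * a * b * (x \<bullet> (P *v y)) + b^2 * (y \<bullet> (P *v y))"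
proof -
  have "y \<bullet> (P *v x) = x \<bullet> (P *v y)" by (rule Psym)
  then show ?thesis
    by (simp add: matrix_vector_right_distrib matrix_vector_mult_scaleR inner_add_left inner_add_right
        power2_eq_square algebra_simps del: scaleR_matrix_vector_assoc)
qed

lemma eig_lt1:
  fixes F P :: "real^'n^'n"
  assumes Psym: "\<And>x y. x \<bullet> (P *v y) = y \<bullet> (P *v x)"
    and pos: "\<And>x. x \<noteq> 0 \<Longrightarrow> x \<bullet> (P *v x) > 0"
    and contr: "\<And>x. x \<noteq> 0 \<Longrightarrow> (F *v x) \<bullet> (P *v (F *v x)) < x \<bullet> (P *v x)"
    and ev: "is_eigenvalue F \<mu>"
  shows "cmod \<mu> < 1"
proof -
  obtain v where v: "v \<noteq> 0" "cmat F *v v = \<mu> *s v" using ev unfolding is_eigenvalue_def by blast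
  define vr where "vr = (\<chi> j. Re (v $ j))"
  define vi where "vi = (\<chi> j. Im (v $ j))"
  define \<alpha> where "\<alpha> = Re \<mu>"
  define \<beta> where "\<beta> = Im \<mu>"
  have comp: "(\<Sum>j\<in>UNIV. complex_of_real (F $ i $ j) * v $ j) = \<mu> * v $ i" for i
    using v(2) by (simp add: vec_eq_iff matrix_vector_mult_def cmat_def)
  have Fr: "F *v vr = \<alpha> *\<^sub>R vr - \<beta> *\<^sub>R vi"
  proof -
    have "Re (\<Sum>j\<in>UNIV. complex_of_real (F $ i $ j) * v $ j) = Re (\<mu> * v $ i)" for i
      using comp by simp
    then show ?thesis by (simp add: vec_eq_iff matrix_vector_mult_def vr_def vi_def \<alpha>_def \<beta>_def Re_sum)
  qed
  have Fi: "F *v vi = \<beta> *\<^sub>R vr + \<alpha> *\<^sub>R vi"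
  proof -
    have "Im (\<Sum>j\<in>UNIV. complex_of_real (F $ i $ j) * v $ j) = Im (\<mu> * v $ i)" for i
      using comp by simp
    then show ?thesis by (simp add: vec_eq_iff matrix_vector_mult_def vr_def vi_def \<alpha>_def \<beta>_def Im_sum algebra_simps)
  qed
  define q where "q x = x \<bullet> (P *v x)" for x
  have q0: "q 0 = 0" by (simp add: q_def)
  have le: "q (F *v x) \<le> q x" for x
    using contr[of x] by (cases "x = 0") (auto simp: q_def)
  have qnn: "q x \<ge> 0" for x using pos[of x] by (cases "x = 0") (auto simp: q_def)
  have nz: "vr \<noteq> 0 \<or> vi \<noteq> 0"
  proof (rule ccontr)
    assume "\<not> (vr \<noteq> 0 \<or> vi \<noteq> 0)"
    then have "v $ j = 0" for j
      by (simp add: vec_eq_iff vr_def vi_def complex_eq_iff)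
    then show False using v(1) by (simp add: vec_eq_iff)
  qed
  have strict: "q (F *v vr) + q (F *v vi) < q vr + q vi"
    using nz le[of vr] le[of vi] contr[of vr] contr[of vi] by (auto simp: q_def)
  have pos_s: "q vr + q vi > 0"
    using nz pos[of vr] pos[of vi] qnn[of vr] qnn[of vi] by (auto simp: q_def)
  have "q (F *v vr) = \<alpha>^2 * q vr + 2 * \<alpha> * (-\<beta>) * (vr \<bullet> (P *v vi)) + \<beta>^2 * q vi"
    unfolding Fr q_def using qf_comb[OF Psym, of \<alpha> vr "-\<beta>" vi] by simp
  moreover have "q (F *v vi) = \<beta>^2 * q vr + 2 * \<beta> * \<alpha> * (vr \<bullet> (P *v vi)) + \<alpha>^2 * q vi"
    unfolding Fi q_def using qf_comb[OF Psym, of \<beta> vr \<alpha> vi] by simp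
  ultimately have "q (F *v vr) + q (F *v vi) = (\<alpha>^2 + \<beta>^2) * (q vr + q vi)"
    by (simp add: algebra_simps)
  with strict have "(\<alpha>^2 + \<beta>^2) * (q vr + q vi) < 1 * (q vr + q vi)" by simp
  then have "\<alpha>^2 + \<beta>^2 < 1"
    by (rule mult_right_less_imp_less) (use pos_s in auto)
  then show ?thesis by (simp add: norm_complex_def \<alpha>_def \<beta>_def)
qed

lemma spec_lt1:
  fixes F :: "real^'n^'n"
  assumes "\<And>\<mu>. is_eigenvalue F \<mu> \<Longrightarrow> cmod \<mu> < 1"
  shows "spectral_radius F < 1"
  unfolding spectral_radius_def
  using eig_finite_ne[of F] assms by (subst Max_less_iff) auto


lemma transpose_add: "transpose (A + B) = transpose A + (transpose B :: real^'n^'m)"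
  by (simp add: transpose_def vec_eq_iff)

lemma scaleR_mv: fixes A :: "real^'n^'m" shows "(c *\<^sub>R A) *v x = c *\<^sub>R (A *v x)"
  by (simp add: scaleR_matrix_vector_assoc)

lemmas mv_simps = matrix_vector_mult_diff_rdistrib matrix_vector_mult_add_rdistrib
  matrix_vector_mul_assoc[symmetric] neg_mv matrix_vector_mult_diff_distrib
  matrix_vector_right_distrib matrix_vector_mult_scaleR scaleR_mv matrix_vector_mul_lid vec.neg

lemma lmi_pos:
  assumes "pos_def X" "z \<noteq> 0" shows "z \<bullet> (X *v z) > 0"
  using assms unfolding pos_def_def by blast

lemma lmi_psd:
  assumes "pos_semidef X" shows "z \<bullet> (X *v z) \<ge> 0"
  using assms unfolding pos_semidef_def by blast

lemma pd_sym: assumes "pos_def X" shows "x \<bullet> (X *v y) = y \<bullet> (X *v x)"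
  using assms vec_from_sym unfolding pos_def_def sym_mat_def by blast

lemma psd_sym: assumes "pos_semidef X" shows "x \<bullet> (X *v y) = y \<bullet> (X *v x)"
  using assms vec_from_sym unfolding pos_semidef_def sym_mat_def by blast


theorem theorem4:
  fixes A :: "real^'nx^'nx" and C :: "real^'nx^'ny"
    and Bw :: "real^'nw^'nx" and Dw :: "real^'nw^'ny"
    and W :: "real^'ny^'ny" and Da :: "real^'na^'ny"
    and idx :: "'na \<Rightarrow> 'ny"
    and P :: "real^'nx^'nx" and Z :: "real^'ny^'ny"
    and G :: "real^'ny^'nx" and Y :: "real^'na^'ny"
    and M :: "real^'nx^'ny" and L :: "real^'ny^'nx"
    and lam gamma :: real
  assumes det: "detectable A C"
    and stab: "stabilizable A Bw"
    and W_psd: "pos_semidef W"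
    and idx_inj: "inj idx"
    and Da_def: "Da = (\<chi> j i. if j = idx i then 1 else 0)"
    and no_eig1: "\<not> is_eigenvalue A 1"
    and M_def: "M = C ** matrix_inv (mat 1 - A)"
    and gamma_pos: "gamma > 0"
    and lam_pos: "lam > 0"
    and P_pd: "pos_def P"
    and Z_pd: "pos_def Z"
    and LMI1: "pos_def (sblk (sblk P (P ** A - G ** C) P)
                              (vstack (P ** Bw - G ** Dw) (0 :: real^'nw^'nx))
                              (mat 1))"
    and LMI2: "pos_def (sblk (sblk Z (Z ** C) P)
                              (vstack (Z ** Dw) (0 :: real^'nw^'nx))
                              (mat 1))"
    and LMI3: "pos_semidef (sblk
                 (sblk (transpose Da ** Y + transpose Y ** Da - lam *\<^sub>R (transpose Da ** W ** Da))
                       (transpose Y) ((1/2) *\<^sub>R Z))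
                 (blk (- (transpose Y ** M)) (0 :: real^'nx^'na) (0 :: real^'nx^'ny) (transpose G))
                 (blk ((1 / gamma) *\<^sub>R P) (0 :: real^'nx^'nx) (0 :: real^'nx^'nx) (gamma *\<^sub>R P)))"
    and Sr_inv: "invertible (Sigma_r A C Bw Dw (matrix_inv P ** G))"
    and L_def: "L = matrix_inv P ** G"
  shows "spectral_radius (A - L ** C) < 1 \<and>
         pos_semidef ((1/2) *\<^sub>R (transpose Da ** transpose (matrix_inv (mat 1 + M ** L))
                        ** matrix_inv (Sigma_r A C Bw Dw L) ** matrix_inv (mat 1 + M ** L) ** Da)
                      - lam *\<^sub>R (transpose Da ** W ** Da))"
proof -
  have Psym: "\<And>x y. x \<bullet> (P *v y) = y \<bullet> (P *v x)" using pd_sym[OF P_pd] by blast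
  have Ppos: "\<And>x. x \<noteq> 0 \<Longrightarrow> x \<bullet> (P *v x) > 0" using lmi_pos[OF P_pd] by blast
  define Q where "Q = matrix_inv P"
  have PQ: "P ** Q = mat 1" and QP: "Q ** P = mat 1"
    using invertible_inv[OF pos_def_invertible[OF P_pd]] by (simp_all add: Q_def)
  have PQv: "P *v (Q *v v) = v" for v by (simp add: matrix_vector_mul_assoc PQ)
  have QPv: "Q *v (P *v v) = v" for v by (simp add: matrix_vector_mul_assoc QP)
  have Qsym: "\<And>x y. x \<bullet> (Q *v y) = y \<bullet> (Q *v x)" using inv_sym[OF Psym PQ] by blast
  have Qpos: "v \<bullet> (Q *v v) > 0" if "v \<noteq> 0" for v
  proof -
    have "Q *v v \<noteq> 0" using that PQv[of v] by auto
    then have "(Q *v v) \<bullet> (P *v (Q *v v)) > 0" by (rule Ppos)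
    then show ?thesis by (simp add: PQv inner_commute)
  qed
  have GL: "G *v y = P *v (L *v y)" for y
    by (simp add: L_def Q_def[symmetric] matrix_vector_mul_assoc[symmetric] PQv)
  define F where "F = A - L ** C"
  define E where "E = Bw - L ** Dw"
  have Fv: "F *v b = A *v b - L *v (C *v b)" for b by (simp add: F_def mv_simps)
  have Ev: "E *v c = Bw *v c - L *v (Dw *v c)" for c by (simp add: E_def mv_simps)
  have K1: "(P ** A - G ** C) *v b = P *v (F *v b)" for b
    by (simp add: mv_simps GL Fv)
  have K2: "(P ** Bw - G ** Dw) *v c = P *v (E *v c)" for c
    by (simp add: mv_simps GL Ev)
  have lmi1: "a \<bullet> (P *v a) + 2 * (a \<bullet> (P *v (F *v b))) + b \<bullet> (P *v b) + 2 * (a \<bullet> (P *v (E *v c))) + c \<bullet> c > 0"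
    if "vjoin (vjoin a b) c \<noteq> 0" for a b c
    using lmi_pos[OF LMI1 that] unfolding quad3 K1 K2 by simp
  have contrP: "(F *v b) \<bullet> (P *v (F *v b)) < b \<bullet> (P *v b)" if "b \<noteq> 0" for b
  proof -
    have "vjoin (vjoin (- (F *v b)) b) 0 \<noteq> 0" using that by (simp add: vjoin_eq_0)
    from lmi1[OF this] show ?thesis by (simp add: vec.neg)
  qed
  have spec: "spectral_radius (A - L ** C) < 1"
    using spec_lt1[OF eig_lt1[OF Psym Ppos contrP]] by (simp add: F_def)
  define Ft where "Ft = transpose F"
  define Et where "Et = transpose E"
  have h1: "(Ft *v v) \<bullet> (Q *v (Ft *v v)) + (Et *v v) \<bullet> (Et *v v) < v \<bullet> (Q *v v)" if "v \<noteq> 0" for v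
  proof -
    define a where "a = Q *v v"
    define b where "b = - (Q *v (Ft *v v))"
    define c where "c = - (Et *v v)"
    have "a \<noteq> 0" using that PQv[of v] by (auto simp: a_def)
    then have nz: "vjoin (vjoin a b) c \<noteq> 0" by (simp add: vjoin_eq_0)
    have t1: "a \<bullet> (P *v a) = v \<bullet> (Q *v v)" by (simp add: a_def PQv inner_commute)
    have t2: "a \<bullet> (P *v (F *v b)) = - ((Ft *v v) \<bullet> (Q *v (Ft *v v)))"
    proof -
      have "a \<bullet> (P *v (F *v b)) = (F *v b) \<bullet> (P *v a)" by (rule Psym)
      also have "\<dots> = v \<bullet> (F *v b)" by (simp add: a_def PQv inner_commute)
      also have "\<dots> = (Ft *v v) \<bullet> b" by (simp only: Ft_def inner_mv_tr)
      finally show ?thesis by (simp add: b_def vec.neg)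
    qed
    have t3: "b \<bullet> (P *v b) = (Ft *v v) \<bullet> (Q *v (Ft *v v))"
      by (simp add: b_def vec.neg PQv inner_commute)
    have t4: "a \<bullet> (P *v (E *v c)) = - ((Et *v v) \<bullet> (Et *v v))"
    proof -
      have "a \<bullet> (P *v (E *v c)) = (E *v c) \<bullet> (P *v a)" by (rule Psym)
      also have "\<dots> = v \<bullet> (E *v c)" by (simp add: a_def PQv inner_commute)
      also have "\<dots> = (Et *v v) \<bullet> c" by (simp only: Et_def inner_mv_tr)
      finally show ?thesis by (simp add: c_def)
    qed
    have t5: "c \<bullet> c = (Et *v v) \<bullet> (Et *v v)" by (simp add: c_def)
    show ?thesis using lmi1[OF nz] unfolding t1 t2 t3 t4 t5 by simp
  qed
  have h1': "(Ft *v v) \<bullet> (Q *v (Ft *v v)) + (Et *v v) \<bullet> (Et *v v) \<le> v \<bullet> (Q *v v)" for v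
    using h1[of v] by (cases "v = 0") auto
  have contrQ: "(Ft *v v) \<bullet> (Q *v (Ft *v v)) < v \<bullet> (Q *v v)" if "v \<noteq> 0" for v
    using h1[OF that] by (smt (verit) inner_ge_zero)
  have tend: "\<And>v. (\<lambda>k. ((*v) Ft ^^ k) v) \<longlonglongrightarrow> 0"
    by (rule contraction_tendsto[OF contrQ Qpos])
  define Sx where "Sx = Sigma_x A C Bw Dw L"
  have ex1: "\<exists>!S. S = F ** S ** Ft + E ** Et"
    using lyap_unique[of F "E ** Et"] tend by (simp add: Ft_def)
  have SxEq: "Sx = F ** Sx ** Ft + E ** Et"
    unfolding Sx_def Sigma_x_def F_def[symmetric] E_def[symmetric] Ft_def[symmetric] Et_def[symmetric]
    by (rule theI'[OF ex1])
  have "transpose Sx = F ** transpose Sx ** Ft + E ** Et"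
    by (subst SxEq) (simp add: transpose_add matrix_transpose_mul Ft_def Et_def matrix_mul_assoc)
  then have SxT: "transpose Sx = Sx" using ex1 SxEq by blast
  have SxSym: "\<And>x y. x \<bullet> (Sx *v y) = y \<bullet> (Sx *v x)" using vec_from_sym[OF SxT] by blast
  have SxV: "v \<bullet> (Sx *v v) = (Ft *v v) \<bullet> (Sx *v (Ft *v v)) + (Et *v v) \<bullet> (Et *v v)" for v
  proof -
    have "v \<bullet> (Sx *v v) = v \<bullet> ((F ** Sx ** Ft + E ** Et) *v v)" using SxEq by simp
    also have "\<dots> = v \<bullet> (F *v (Sx *v (Ft *v v))) + v \<bullet> (E *v (Et *v v))"
      by (simp only: matrix_vector_mult_add_rdistrib matrix_vector_mul_assoc[symmetric] inner_add_right)
    also have "\<dots> = (Ft *v v) \<bullet> (Sx *v (Ft *v v)) + (Et *v v) \<bullet> (Et *v v)"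
      by (simp only: Ft_def Et_def inner_mv_tr)
    finally show ?thesis .
  qed
  have Sxpsd: "v \<bullet> (Sx *v v) \<ge> 0" for v
  proof (rule lyap_psd[OF tend])
    fix w show "(Ft *v w) \<bullet> (Sx *v (Ft *v w)) \<le> w \<bullet> (Sx *v w)"
      using SxV[of w] inner_ge_zero[of "Et *v w"] by linarith
  qed
  have SxQ: "v \<bullet> (Sx *v v) \<le> v \<bullet> (Q *v v)" for v
  proof -
    have "v \<bullet> ((Q - Sx) *v v) \<ge> 0"
    proof (rule lyap_psd[OF tend])
      fix w show "(Ft *v w) \<bullet> ((Q - Sx) *v (Ft *v w)) \<le> w \<bullet> ((Q - Sx) *v w)"
        using SxV[of w] h1'[of w] by (simp add: matrix_vector_mult_diff_rdistrib inner_diff_right)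
    qed
    then show ?thesis by (simp add: matrix_vector_mult_diff_rdistrib inner_diff_right)
  qed
  define Sr where "Sr = Sigma_r A C Bw Dw L"
  have Srv: "x \<bullet> (Sr *v y) = (transpose C *v x) \<bullet> (Sx *v (transpose C *v y)) + (transpose Dw *v x) \<bullet> (transpose Dw *v y)" for x y
  proof -
    have "x \<bullet> (Sr *v y) = x \<bullet> ((C ** Sx ** transpose C + Dw ** transpose Dw) *v y)"
      by (simp add: Sr_def Sigma_r_def Sx_def)
    also have "\<dots> = x \<bullet> (C *v (Sx *v (transpose C *v y))) + x \<bullet> (Dw *v (transpose Dw *v y))"
      by (simp only: matrix_vector_mult_add_rdistrib matrix_vector_mul_assoc[symmetric] inner_add_right)
    also have "\<dots> = (transpose C *v x) \<bullet> (Sx *v (transpose C *v y)) + (transpose Dw *v x) \<bullet> (transpose Dw *v y)"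
      by (simp only: inner_mv_tr)
    finally show ?thesis .
  qed
  have SrSym: "\<And>x y. x \<bullet> (Sr *v y) = y \<bullet> (Sr *v x)"
    using SxSym by (simp add: Srv inner_commute)
  have Srpsd: "x \<bullet> (Sr *v x) \<ge> 0" for x
    using Sxpsd[of "transpose C *v x"] inner_ge_zero[of "transpose Dw *v x"] by (simp add: Srv)
  have Srinv: "invertible Sr" using Sr_inv by (simp add: Sr_def L_def)
  define Sri where "Sri = matrix_inv Sr"
  have SrSri: "Sr ** Sri = mat 1" using invertible_inv[OF Srinv] by (simp add: Sri_def)
  have SrSriv: "Sr *v (Sri *v x) = x" for x by (simp add: matrix_vector_mul_assoc SrSri)
  have SriSym: "\<And>x y. x \<bullet> (Sri *v y) = y \<bullet> (Sri *v x)" using inv_sym[OF SrSym SrSri] by blast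
  have Zsym: "\<And>x y. x \<bullet> (Z *v y) = y \<bullet> (Z *v x)" using pd_sym[OF Z_pd] by blast
  have lmi2: "x \<bullet> (Z *v x) + 2 * (x \<bullet> (Z *v (C *v b))) + b \<bullet> (P *v b) + 2 * (x \<bullet> (Z *v (Dw *v c))) + c \<bullet> c > 0"
    if "vjoin (vjoin x b) c \<noteq> 0" for x b c
    using lmi_pos[OF LMI2 that] unfolding quad3 by (simp add: matrix_vector_mul_assoc[symmetric])
  have ZSr: "(Z *v x) \<bullet> (Sr *v (Z *v x)) \<le> x \<bullet> (Z *v x)" for x
  proof -
    define a where "a = Z *v x"
    define b where "b = - (Q *v (transpose C *v a))"
    define c where "c = - (transpose Dw *v a)"
    have t2: "x \<bullet> (Z *v (C *v b)) = - ((transpose C *v a) \<bullet> (Q *v (transpose C *v a)))"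
    proof -
      have "x \<bullet> (Z *v (C *v b)) = (C *v b) \<bullet> a" by (simp add: a_def Zsym)
      also have "\<dots> = (transpose C *v a) \<bullet> b" by (simp only: inner_commute[of "C *v b"] inner_mv_tr)
      finally show ?thesis by (simp add: b_def vec.neg)
    qed
    have t3: "b \<bullet> (P *v b) = (transpose C *v a) \<bullet> (Q *v (transpose C *v a))"
      by (simp add: b_def vec.neg PQv inner_commute)
    have t4: "x \<bullet> (Z *v (Dw *v c)) = - ((transpose Dw *v a) \<bullet> (transpose Dw *v a))"
    proof -
      have "x \<bullet> (Z *v (Dw *v c)) = (Dw *v c) \<bullet> a" by (simp add: a_def Zsym)
      also have "\<dots> = (transpose Dw *v a) \<bullet> c" by (simp only: inner_commute[of "Dw *v c"] inner_mv_tr)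
      finally show ?thesis by (simp add: c_def)
    qed
    have t5: "c \<bullet> c = (transpose Dw *v a) \<bullet> (transpose Dw *v a)" by (simp add: c_def)
    have key: "(transpose C *v a) \<bullet> (Q *v (transpose C *v a)) + (transpose Dw *v a) \<bullet> (transpose Dw *v a) \<le> x \<bullet> (Z *v x)"
    proof (cases "x = 0")
      case True then show ?thesis by (simp add: a_def)
    next
      case False
      then have nz: "vjoin (vjoin x b) c \<noteq> 0" by (simp add: vjoin_eq_0)
      show ?thesis using lmi2[OF nz] unfolding t2 t3 t4 t5 by simp
    qed
    have "a \<bullet> (Sr *v a) = (transpose C *v a) \<bullet> (Sx *v (transpose C *v a)) + (transpose Dw *v a) \<bullet> (transpose Dw *v a)"
      by (rule Srv)
    then show ?thesis using key SxQ[of "transpose C *v a"] by (simp add: a_def)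
  qed
  have SriZ: "x \<bullet> (Z *v x) \<le> x \<bullet> (Sri *v x)" for x
  proof -
    define y where "y = Sri *v x"
    define w where "w = Z *v x"
    have Sry: "Sr *v y = x" by (simp add: y_def SrSriv)
    have "0 \<le> (1 *\<^sub>R y + (-1) *\<^sub>R w) \<bullet> (Sr *v (1 *\<^sub>R y + (-1) *\<^sub>R w))" by (rule Srpsd)
    also have "\<dots> = y \<bullet> (Sr *v y) - 2 * (y \<bullet> (Sr *v w)) + w \<bullet> (Sr *v w)"
      using qf_comb[OF SrSym, of 1 y "-1" w] by simp
    also have "\<dots> = x \<bullet> (Sri *v x) - 2 * (x \<bullet> (Z *v x)) + w \<bullet> (Sr *v w)"
    proof -
      have "y \<bullet> (Sr *v w) = w \<bullet> x" using SrSym[of y w] Sry by simp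
      then show ?thesis using Sry by (simp add: y_def w_def inner_commute)
    qed
    finally show ?thesis using ZSr[of x] by (simp add: w_def)
  qed
  define NA where "NA = mat 1 - A"
  have NAinv: "invertible NA"
  proof (rule inj_invertible)
    fix z assume h: "NA *v z = 0"
    show "z = 0"
    proof (rule ccontr)
      assume zn: "z \<noteq> 0"
      have Az: "A *v z = z" using h by (simp add: NA_def matrix_vector_mult_diff_rdistrib)
      define zc where "zc = (\<chi> j. complex_of_real (z $ j))"
      have "zc \<noteq> 0" using zn by (simp add: zc_def vec_eq_iff)
      moreover have "cmat A *v zc = 1 *s zc"
      proof -
        have "(\<Sum>j\<in>UNIV. complex_of_real (A $ i $ j) * complex_of_real (z $ j)) = complex_of_real (z $ i)" for i
        proof -
          have "(\<Sum>j\<in>UNIV. A $ i $ j * z $ j) = z $ i" using Az by (simp add: vec_eq_iff matrix_vector_mult_def)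
          then have "complex_of_real (\<Sum>j\<in>UNIV. A $ i $ j * z $ j) = complex_of_real (z $ i)" by simp
          then show ?thesis by (simp add: of_real_sum)
        qed
        then show ?thesis by (simp add: vec_eq_iff matrix_vector_mult_def cmat_def zc_def)
      qed
      ultimately have "is_eigenvalue A 1" unfolding is_eigenvalue_def by blast
      then show False using no_eig1 by simp
    qed
  qed
  define Ni where "Ni = matrix_inv NA"
  have NANi: "NA *v (Ni *v x) = x" for x
    using invertible_inv[OF NAinv] by (simp add: Ni_def matrix_vector_mul_assoc)
  have Mv: "M *v x = C *v (Ni *v x)" for x
    by (simp add: M_def Ni_def NA_def matrix_vector_mul_assoc)
  define H where "H = mat 1 + M ** L"
  have Hv: "H *v x = x + C *v (Ni *v (L *v x))" for x
    by (simp add: H_def matrix_vector_mult_add_rdistrib matrix_vector_mul_assoc[symmetric] Mv)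
  have Hinv: "invertible H"
  proof (rule inj_invertible)
    fix v assume h: "H *v v = 0"
    define zz where "zz = Ni *v (L *v v)"
    have v: "v = - (C *v zz)" using h by (simp add: Hv zz_def eq_neg_iff_add_eq_0)
    have "NA *v zz = L *v v" by (simp add: zz_def NANi)
    then have "zz - A *v zz = - (L *v (C *v zz))"
      by (simp add: NA_def matrix_vector_mult_diff_rdistrib v vec.neg)
    then have Fz: "F *v zz = zz" by (simp add: Fv algebra_simps)
    have "zz = 0"
    proof (rule ccontr)
      assume "zz \<noteq> 0"
      from contrP[OF this] show False by (simp add: Fz)
    qed
    then show "v = 0" by (simp add: v)
  qed
  define Hi where "Hi = matrix_inv H"
  have HHi: "H *v (Hi *v x) = x" for x
    using invertible_inv[OF Hinv] by (simp add: Hi_def matrix_vector_mul_assoc)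
  have Wsym: "\<And>x y. x \<bullet> (W *v y) = y \<bullet> (W *v x)" using psd_sym[OF W_psd] by blast
  define Tm where "Tm = (1/2) *\<^sub>R (transpose Da ** transpose Hi ** Sri ** Hi ** Da) - lam *\<^sub>R (transpose Da ** W ** Da)"
  have Tv: "x \<bullet> (Tm *v y) = (1/2) * ((Hi *v (Da *v x)) \<bullet> (Sri *v (Hi *v (Da *v y)))) - lam * ((Da *v x) \<bullet> (W *v (Da *v y)))" for x y
    by (simp add: Tm_def mv_simps inner_diff_right tr_inner del: scaleR_matrix_vector_assoc transpose_matrix_vector)
  have Tsym: "sym_mat Tm"
    unfolding sym_mat_def by (rule sym_from_vec) (simp add: Tv SriSym Wsym)
  have Tpsd: "u \<bullet> (Tm *v u) \<ge> 0" for u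
  proof -
    define x where "x = Hi *v (Da *v u)"
    have Dax: "Da *v u = x + M *v (L *v x)"
      using HHi[of "Da *v u"] by (simp add: x_def Hv Mv)
    define s where "s = (L *v x) \<bullet> (P *v (L *v x))"
    let ?\<Theta> = "transpose Da ** Y + transpose Y ** Da - lam *\<^sub>R (transpose Da ** W ** Da)"
    have z3: "0 \<le> vjoin (vjoin u (- x)) (vjoin (L *v x) ((1/gamma) *\<^sub>R (L *v x))) \<bullet>
       (sblk (sblk ?\<Theta> (transpose Y) ((1/2) *\<^sub>R Z))
                 (blk (- (transpose Y ** M)) (0 :: real^'nx^'na) (0 :: real^'nx^'ny) (transpose G))
                 (blk ((1 / gamma) *\<^sub>R P) (0 :: real^'nx^'nx) (0 :: real^'nx^'nx) (gamma *\<^sub>R P))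
        *v vjoin (vjoin u (- x)) (vjoin (L *v x) ((1/gamma) *\<^sub>R (L *v x))))"
      by (rule lmi_psd[OF LMI3])
    have e1: "u \<bullet> (?\<Theta> *v u) = 2 * ((Y *v u) \<bullet> (Da *v u)) - lam * ((Da *v u) \<bullet> (W *v (Da *v u)))"
      by (simp add: mv_simps inner_diff_right inner_add_right tr_inner inner_commute del: scaleR_matrix_vector_assoc transpose_matrix_vector)
    have e2: "u \<bullet> (transpose Y *v (- x)) = - ((Y *v u) \<bullet> x)"
      by (simp add: tr_inner vec.neg del: transpose_matrix_vector)
    have e3: "(- x) \<bullet> ((1/2) *\<^sub>R Z *v (- x)) = (1/2) * (x \<bullet> (Z *v x))"
      by (simp add: scaleR_mv vec.neg)
    have e4: "u \<bullet> ((- (transpose Y ** M)) *v (L *v x)) = - ((Y *v u) \<bullet> (M *v (L *v x)))"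
      by (simp only: neg_mv matrix_vector_mul_assoc[symmetric] inner_minus_right tr_inner)
    have e5: "(- x) \<bullet> (transpose G *v ((1/gamma) *\<^sub>R (L *v x))) = - (1/gamma) * s"
      by (simp add: tr_inner GL s_def inner_commute vec.neg del: transpose_matrix_vector)
    have e6: "(L *v x) \<bullet> ((1 / gamma) *\<^sub>R P *v (L *v x)) = (1/gamma) * s"
      by (simp add: scaleR_mv s_def)
    have e7: "((1/gamma) *\<^sub>R (L *v x)) \<bullet> (gamma *\<^sub>R P *v ((1/gamma) *\<^sub>R (L *v x))) = (1/gamma) * s"
      using gamma_pos by (simp add: scaleR_mv matrix_vector_mult_scaleR s_def power2_eq_square del: scaleR_matrix_vector_assoc)
    have e8: "(Y *v u) \<bullet> (Da *v u) = (Y *v u) \<bullet> x + (Y *v u) \<bullet> (M *v (L *v x))"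
      by (simp add: Dax inner_add_right)
    have "0 \<le> (1/2) * (x \<bullet> (Z *v x)) - lam * ((Da *v u) \<bullet> (W *v (Da *v u)))"
      using z3 unfolding quad_lmi3 e1 e2 e3 e4 e5 e6 e7 e8 by simp
    moreover have "u \<bullet> (Tm *v u) = (1/2) * (x \<bullet> (Sri *v x)) - lam * ((Da *v u) \<bullet> (W *v (Da *v u)))"
      by (simp add: Tv x_def)
    ultimately show ?thesis using SriZ[of x] by simp
  qed
  have "pos_semidef Tm" unfolding pos_semidef_def using Tsym Tpsd by blast
  then show ?thesis using spec
    by (simp add: Tm_def Hi_def H_def Sri_def Sr_def)
qed
end
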